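(* Let $n\ge 2$ and let $\mathcal{F}=\{f_i\}_{i=1}^k$ be a unit-norm tight frame for $\mathbb{R}^n$ (or $\mathbb{C}^n$). Suppose there exist an index set $I\subseteq\{1,\dots,k\}$ with $|I|=p$ and unit-norm vectors $g_1,\dots,g_q$ such that $\{f_i\}_{i\notin I}\cup\{g_j\}_{j=1}^q$ is a unit-norm tight frame. Then, writing $\tilde f_i$ for the diagram vector of $f_i$, the sum of all entries of the Gramian $(\langle\tilde f_j,\tilde f_i\rangle)_{i,j\notin I}$ of the $k-p$ remaining diagram vectors is at most $q^2$, i.e. $\sum_{i,j\notin I}\langle\tilde f_i,\tilde f_j\rangle\le q^2$.
   Context: A unit-norm tight frame is a sequence of unit vectors $\{h_i\}$ for which there is $\lambda>0$ with $\sum_i|\langle f,h_i\rangle|^2=\lambda\|f\|^2$ for all $f$. Diagram vectors: for $f\in\mathbb{R}^n$, $\tilde f=\frac{1}{\sqrt{n-1}}\,v\in\mathbb{R}^{n(n-1)}$, where $v$ has as entries the differences $f(i)^2-f(j)^2$ for each pair $i<j$ (each exactly once) together with the products $\sqrt{2n}\,f(i)f(j)$ for each pair $i<j$ (each exactly once). For $f\in\mathbb{C}^n$, $\tilde f=\frac{1}{\sqrt{n-1}}\,v\in\mathbb{C}^{3n(n-1)/2}$, where $v$ has as entries $f(i)\overline{f(i)}-f(j)\overline{f(j)}$ for each pair $i<j$ (each exactly once) together with $\sqrt{n}\,f(i)\overline{f(j)}$ for each ordered pair $i\neq j$ (each exactly once). *)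

theory Defs
  imports Complex_Main
begin

text \<open>Vectors in R^n / C^n are represented as functions on nat; only the
coordinates 0..n-1 are used.\<close>

definition rinner :: "nat \<Rightarrow> (nat \<Rightarrow> real) \<Rightarrow> (nat \<Rightarrow> real) \<Rightarrow> real" where
  "rinner n x y = (\<Sum>l<n. x l * y l)"

definition cinner :: "nat \<Rightarrow> (nat \<Rightarrow> complex) \<Rightarrow> (nat \<Rightarrow> complex) \<Rightarrow> complex" where
  "cinner n x y = (\<Sum>l<n. x l * cnj (y l))"

definition rnorm :: "nat \<Rightarrow> (nat \<Rightarrow> real) \<Rightarrow> real" where
  "rnorm n x = sqrt (rinner n x x)"

definition cnorm :: "nat \<Rightarrow> (nat \<Rightarrow> complex) \<Rightarrow> real" where
  "cnorm n x = sqrt (\<Sum>l<n. (cmod (x l))\<^sup>2)"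

definition real_untf :: "nat \<Rightarrow> 'a set \<Rightarrow> ('a \<Rightarrow> nat \<Rightarrow> real) \<Rightarrow> bool" where
  "real_untf n K h \<longleftrightarrow> finite K \<and> (\<forall>i\<in>K. rnorm n (h i) = 1) \<and>
     (\<exists>c>0. \<forall>f. (\<Sum>i\<in>K. \<bar>rinner n f (h i)\<bar>\<^sup>2) = c * (rnorm n f)\<^sup>2)"

definition complex_untf :: "nat \<Rightarrow> 'a set \<Rightarrow> ('a \<Rightarrow> nat \<Rightarrow> complex) \<Rightarrow> bool" where
  "complex_untf n K h \<longleftrightarrow> finite K \<and> (\<forall>i\<in>K. cnorm n (h i) = 1) \<and>
     (\<exists>c>0. \<forall>f. (\<Sum>i\<in>K. (cmod (cinner n f (h i)))\<^sup>2) = c * (cnorm n f)\<^sup>2)"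

definition pairs_lt :: "nat \<Rightarrow> (nat \<times> nat) list" where
  "pairs_lt n = [(i, j). i \<leftarrow> [0..<n], j \<leftarrow> [0..<n], i < j]"

definition pairs_ne :: "nat \<Rightarrow> (nat \<times> nat) list" where
  "pairs_ne n = [(i, j). i \<leftarrow> [0..<n], j \<leftarrow> [0..<n], i \<noteq> j]"

definition real_diagram :: "nat \<Rightarrow> (nat \<Rightarrow> real) \<Rightarrow> real list" where
  "real_diagram n f = map (\<lambda>t. t / sqrt (real n - 1))
     (map (\<lambda>(i, j). (f i)\<^sup>2 - (f j)\<^sup>2) (pairs_lt n) @
      map (\<lambda>(i, j). sqrt (2 * real n) * f i * f j) (pairs_lt n))"

definition complex_diagram :: "nat \<Rightarrow> (nat \<Rightarrow> complex) \<Rightarrow> complex list" where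
  "complex_diagram n f = map (\<lambda>t. t / complex_of_real (sqrt (real n - 1)))
     (map (\<lambda>(i, j). f i * cnj (f i) - f j * cnj (f j)) (pairs_lt n) @
      map (\<lambda>(i, j). complex_of_real (sqrt (real n)) * f i * cnj (f j)) (pairs_ne n))"

definition rinner_list :: "real list \<Rightarrow> real list \<Rightarrow> real" where
  "rinner_list xs ys = sum_list (map2 (*) xs ys)"

definition cinner_list :: "complex list \<Rightarrow> complex list \<Rightarrow> complex" where
  "cinner_list xs ys = sum_list (map2 (\<lambda>x y. x * cnj y) xs ys)"

end

theory Submission
  imports Defs "HOL-Analysis.Convex"
begin
lemma ul: "sum_list (map f [0..<n]) = (\<Sum>i<n. f i)"
  by (induct n) auto
lemma slc: "sum_list (concat xs) = sum_list (map sum_list xs)"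
  by (induct xs) auto
lemma sum_list_pairs_lt: "sum_list (map h (pairs_lt n)) = (\<Sum>i<n. \<Sum>j<n. if i<j then h(i,j) else 0)"
  unfolding pairs_lt_def
  by (simp add: slc map_concat comp_def ul if_distrib cong: if_cong)
lemma sum_list_pairs_ne: "sum_list (map h (pairs_ne n)) = (\<Sum>i<n. \<Sum>j<n. if i\<noteq>j then h(i,j) else 0)"
  unfolding pairs_ne_def
  by (simp add: slc map_concat comp_def ul if_distrib cong: if_cong)
lemma map2_mm: "map2 F (map a L) (map b L) = map (\<lambda>x. F (a x) (b x)) L"
  by (induct L) auto

lemma sym_half:
  fixes F :: "nat \<Rightarrow> nat \<Rightarrow> 'a::comm_ring_1"
  assumes "\<And>i j. F i j = F j i"
  shows "2 * (\<Sum>i<n. \<Sum>j<n. if i<j then F i j else 0) = (\<Sum>i<n. \<Sum>j<n. F i j) - (\<Sum>i<n. F i i)"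
proof -
  have s: "(\<Sum>i<n. \<Sum>j<n. if i<j then F i j else 0) = (\<Sum>i<n. \<Sum>j<n. if j<i then F i j else 0)"
    apply (subst sum.swap)
    apply (intro sum.cong refl)
    using assms by simp
  have "(\<Sum>i<n. \<Sum>j<n. F i j) = (\<Sum>i<n. \<Sum>j<n. (if i<j then F i j else 0) + (if j<i then F i j else 0) + (if i = j then F i j else 0))"
    by (intro sum.cong refl) auto
  also have "\<dots> = (\<Sum>i<n. \<Sum>j<n. if i<j then F i j else 0) + (\<Sum>i<n. \<Sum>j<n. if j<i then F i j else 0) + (\<Sum>i<n. F i i)"
    by (simp add: sum.distrib)
  finally have t: "(\<Sum>i<n. \<Sum>j<n. F i j) = (\<Sum>i<n. \<Sum>j<n. if i<j then F i j else 0) + (\<Sum>i<n. \<Sum>j<n. if i<j then F i j else 0) + (\<Sum>i<n. F i i)"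
    using s by simp
  show ?thesis by (simp only: t mult_2 add_diff_cancel)
qed

lemma sq_sum: "(\<Sum>i<n. \<Sum>j<n. (x i::'a::comm_ring_1) * x j) = (\<Sum>i<n. x i)^2"
  by (simp add: power2_eq_square sum_product)

lemma uv_sum:
  "(\<Sum>i<n. \<Sum>j<n. ((u i::'a::comm_ring_1) - u j) * (v i - v j)) = 2 * of_nat n * (\<Sum>i<n. u i * v i) - 2 * (\<Sum>i<n. u i) * (\<Sum>i<n. v i)"
proof -
  have "(\<Sum>i<n. \<Sum>j<n. (u i - u j) * (v i - v j)) = (\<Sum>i<n. \<Sum>j<n. u i * v i + u j * v j - u i * v j - u j * v i)"
    by (intro sum.cong refl) (simp add: algebra_simps)
  also have "\<dots> = (\<Sum>i<n. \<Sum>j<n. u i * v i) + (\<Sum>i<n. \<Sum>j<n. u j * v j) - (\<Sum>i<n. \<Sum>j<n. u i * v j) - (\<Sum>i<n. \<Sum>j<n. u j * v i)"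
    by (simp only: sum_subtractf sum.distrib)
  also have "(\<Sum>i<n. \<Sum>j<n. u i * v i) = of_nat n * (\<Sum>i<n. u i * v i)" by (simp add: sum_distrib_left)
  also have "(\<Sum>i<n. \<Sum>j<n. u j * v j) = of_nat n * (\<Sum>i<n. u i * v i)" by simp
  also have "(\<Sum>i<n. \<Sum>j<n. u i * v j) = (\<Sum>i<n. u i) * (\<Sum>i<n. v i)" by (simp add: sum_product)
  also have "(\<Sum>i<n. \<Sum>j<n. u j * v i) = (\<Sum>i<n. u i) * (\<Sum>i<n. v i)" by (subst sum_product) (rule sum.swap)
  finally show ?thesis by (simp only: mult_2 distrib_right diff_diff_eq)
qed
lemma rinner_list_append: "length xs1 = length ys1 \<Longrightarrow> rinner_list (xs1@xs2) (ys1@ys2) = rinner_list xs1 ys1 + rinner_list xs2 ys2"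
  by (simp add: rinner_list_def)
lemma rinner_list_map: "rinner_list (map a L) (map b L) = sum_list (map (\<lambda>x. a x * b x) L)"
  by (simp add: rinner_list_def map2_mm)

lemma real_diag:
  assumes n: "n \<ge> 2"
  shows "rinner_list (real_diagram n f) (real_diagram n g) = (real n * (rinner n f g)^2 - rinner n f f * rinner n g g) / (real n - 1)"
proof -
  define s where "s = sqrt (real n - 1)"
  have s2: "s * s = real n - 1" using n unfolding s_def by simp
  have sp: "s > 0" using n unfolding s_def by simp
  have t2: "sqrt (2 * real n) * sqrt (2 * real n) = 2 * real n" by simp
  define u where "u i = (f i)^2" for i
  define v where "v i = (g i)^2" for i
  define x where "x i = f i * g i" for i
  have D: "real_diagram n h = map (\<lambda>(i,j). ((h i)\<^sup>2 - (h j)\<^sup>2) / s) (pairs_lt n) @ map (\<lambda>(i,j). sqrt (2 * real n) * h i * h j / s) (pairs_lt n)" for h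
    unfolding real_diagram_def s_def by (simp add: case_prod_beta comp_def)
  have "rinner_list (real_diagram n f) (real_diagram n g) =
     sum_list (map (\<lambda>p. (case p of (i,j) \<Rightarrow> ((f i)\<^sup>2 - (f j)\<^sup>2) / s) * (case p of (i,j) \<Rightarrow> ((g i)\<^sup>2 - (g j)\<^sup>2) / s)) (pairs_lt n))
   + sum_list (map (\<lambda>p. (case p of (i,j) \<Rightarrow> sqrt (2 * real n) * f i * f j / s) * (case p of (i,j) \<Rightarrow> sqrt (2 * real n) * g i * g j / s)) (pairs_lt n))"
    unfolding D by (simp add: rinner_list_append rinner_list_map)
  also have "\<dots> = (\<Sum>i<n. \<Sum>j<n. if i<j then (u i - u j) * (v i - v j) else 0) / (s*s)
     + (\<Sum>i<n. \<Sum>j<n. if i<j then 2 * real n * (x i * x j) else 0) / (s*s)"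
    unfolding sum_list_pairs_lt sum_divide_distrib
    apply (intro arg_cong2[where f="(+)"] sum.cong refl)
    using t2 by (auto simp: u_def v_def x_def algebra_simps)
  also have "\<dots> = (real n * (rinner n f g)^2 - rinner n f f * rinner n g g) / (real n - 1)"
  proof -
    have A: "2 * (\<Sum>i<n. \<Sum>j<n. if i<j then (u i - u j) * (v i - v j) else 0) = 2 * real n * (\<Sum>i<n. u i * v i) - 2 * (\<Sum>i<n. u i) * (\<Sum>i<n. v i)"
      using sym_half[of "\<lambda>i j. (u i - u j) * (v i - v j)" n] uv_sum[of u v n]
      by (simp add: algebra_simps)
    have B0: "2 * (\<Sum>i<n. \<Sum>j<n. if i<j then x i * x j else 0) = (\<Sum>i<n. x i)^2 - (\<Sum>i<n. x i * x i)"
      using sym_half[of "\<lambda>i j. x i * x j" n] sq_sum[of x n]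
      by (simp add: algebra_simps)
    have B: "(\<Sum>i<n. \<Sum>j<n. if i<j then 2 * real n * (x i * x j) else 0) = 2 * real n * (\<Sum>i<n. \<Sum>j<n. if i<j then x i * x j else 0)"
      by (simp add: sum_distrib_left if_distrib cong: if_cong)
    have uv: "(\<Sum>i<n. u i * v i) = (\<Sum>i<n. x i * x i)"
      by (simp add: u_def v_def x_def power2_eq_square algebra_simps)
    have r: "rinner n f g = (\<Sum>i<n. x i)" "rinner n f f = (\<Sum>i<n. u i)" "rinner n g g = (\<Sum>i<n. v i)"
      by (simp_all add: rinner_def x_def u_def v_def power2_eq_square)
    define P where "P = (\<Sum>i<n. \<Sum>j<n. if i<j then (u i - u j) * (v i - v j) else 0)"
    define Q where "Q = (\<Sum>i<n. \<Sum>j<n. if i<j then x i * x j else 0)"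
    define XX where "XX = (\<Sum>i<n. x i * x i)"
    define X where "X = (\<Sum>i<n. x i)"
    define U where "U = (\<Sum>i<n. u i)"
    define V where "V = (\<Sum>i<n. v i)"
    have e1: "P = real n * XX - U * V" using A uv unfolding P_def XX_def U_def V_def by (simp add: algebra_simps)
    have e2: "2 * Q = X^2 - XX" using B0 unfolding Q_def XX_def X_def by simp
    have "P + 2 * real n * Q = real n * X^2 - U * V"
    proof -
      have "2 * real n * Q = real n * (2 * Q)" by simp
      also have "\<dots> = real n * X^2 - real n * XX" by (simp add: e2 right_diff_distrib)
      finally show ?thesis using e1 by simp
    qed
    then show ?thesis
      unfolding B r s2 P_def[symmetric] Q_def[symmetric] X_def[symmetric] U_def[symmetric] V_def[symmetric]
      by (simp add: add_divide_distrib[symmetric] mult.assoc)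
  qed
  finally show ?thesis .
qed
lemma cinner_list_append: "length xs1 = length ys1 \<Longrightarrow> cinner_list (xs1@xs2) (ys1@ys2) = cinner_list xs1 ys1 + cinner_list xs2 ys2"
  by (simp add: cinner_list_def)
lemma cinner_list_map: "cinner_list (map a L) (map b L) = sum_list (map (\<lambda>x. a x * cnj (b x)) L)"
  by (simp add: cinner_list_def map2_mm)
lemma dsum0: "(x::nat) < n \<Longrightarrow> (\<Sum>j<n. if x = j then (G x j::'a::comm_ring_1) else 0) = G x x"
  by (subst sum.delta') auto
lemma dsum: "(\<Sum>i<(n::nat). \<Sum>j<n. if i = j then (G i j::'a::comm_ring_1) else 0) = (\<Sum>i<n. G i i)"
proof (rule sum.cong[OF refl])
  fix i assume "i \<in> {..<n}"
  thus "(\<Sum>j<n. if i = j then G i j else 0) = G i i" using dsum0[of i n G] by simp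
qed
lemma ne_sum: "(\<Sum>i<(n::nat). \<Sum>j<n. if i \<noteq> j then (G i j::'a::comm_ring_1) else 0) = (\<Sum>i<n. \<Sum>j<n. G i j) - (\<Sum>i<n. G i i)"
proof -
  have "(\<Sum>i<n. \<Sum>j<n. G i j) = (\<Sum>i<n. \<Sum>j<n. (if i \<noteq> j then G i j else 0) + (if i = j then G i j else 0))"
    by (intro sum.cong refl) auto
  also have "\<dots> = (\<Sum>i<n. \<Sum>j<n. if i \<noteq> j then G i j else 0) + (\<Sum>i<n. G i i)"
    by (simp only: sum.distrib dsum)
  finally show ?thesis by simp
qed

lemma complex_diag:
  assumes n: "n \<ge> 2"
  shows "cinner_list (complex_diagram n f) (complex_diagram n g) =
    complex_of_real ((real n * (cmod (cinner n f g))^2 - (\<Sum>l<n. (cmod (f l))\<^sup>2) * (\<Sum>l<n. (cmod (g l))\<^sup>2)) / (real n - 1))"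
proof -
  define s where "s = complex_of_real (sqrt (real n - 1))"
  have s2: "s * s = of_real (real n - 1)" using n unfolding s_def by (simp flip: of_real_mult)
  have sp: "s \<noteq> 0" using n unfolding s_def by simp
  have cs: "cnj s = s" unfolding s_def by simp
  define r where "r = complex_of_real (sqrt (real n))"
  have r2: "r * r = of_nat n" unfolding r_def by (simp flip: of_real_mult)
  have cr: "cnj r = r" unfolding r_def by simp
  define u where "u i = f i * cnj (f i)" for i
  define v where "v i = g i * cnj (g i)" for i
  define y where "y i = f i * cnj (g i)" for i
  have cv: "cnj (v i) = v i" for i unfolding v_def by simp
  have D: "complex_diagram n h = map (\<lambda>(i,j). (h i * cnj (h i) - h j * cnj (h j)) / s) (pairs_lt n) @ map (\<lambda>(i,j). r * h i * cnj (h j) / s) (pairs_ne n)" for h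
    unfolding complex_diagram_def s_def r_def by (simp add: case_prod_beta comp_def)
  have len: "length (pairs_lt n) = length (pairs_lt n)" by simp
  have "cinner_list (complex_diagram n f) (complex_diagram n g) =
     (\<Sum>i<n. \<Sum>j<n. if i<j then (u i - u j) * (v i - v j) else 0) / (s*s)
     + (\<Sum>i<n. \<Sum>j<n. if i\<noteq>j then of_nat n * (y i * cnj (y j)) else 0) / (s*s)"
    unfolding D
    apply (simp only: cinner_list_append length_map cinner_list_map sum_list_pairs_lt sum_list_pairs_ne sum_divide_distrib)
    apply (intro arg_cong2[where f="(+)"] sum.cong refl)
    using r2 cr cs by (auto simp: u_def v_def y_def algebra_simps)
  also have "\<dots> = complex_of_real ((real n * (cmod (cinner n f g))^2 - (\<Sum>l<n. (cmod (f l))\<^sup>2) * (\<Sum>l<n. (cmod (g l))\<^sup>2)) / (real n - 1))"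
  proof -
    define P where "P = (\<Sum>i<n. \<Sum>j<n. if i<j then (u i - u j) * (v i - v j) else 0)"
    define Q where "Q = (\<Sum>i<n. \<Sum>j<n. if i\<noteq>j then of_nat n * (y i * cnj (y j)) else 0)"
    define YY where "YY = (\<Sum>i<n. y i * cnj (y i))"
    define Y where "Y = (\<Sum>i<n. y i)"
    define U where "U = (\<Sum>i<n. u i)"
    define V where "V = (\<Sum>i<n. v i)"
    have uv: "(\<Sum>i<n. u i * v i) = YY"
      unfolding YY_def by (intro sum.cong refl) (simp add: u_def v_def y_def algebra_simps)
    have A: "2 * P = 2 * of_nat n * YY - 2 * U * V"
      using sym_half[of "\<lambda>i j. (u i - u j) * (v i - v j)" n] uv_sum[of u v n] uv
      unfolding P_def U_def V_def by (simp add: algebra_simps)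
    have e1: "P = of_nat n * YY - U * V"
    proof -
      have "2 * P = 2 * (of_nat n * YY - U * V)" using A by (simp only: right_diff_distrib mult.assoc)
      thus ?thesis by (subst (asm) mult_cancel_left) simp
    qed
    have "Q = of_nat n * (\<Sum>i<n. \<Sum>j<n. if i\<noteq>j then y i * cnj (y j) else 0)"
      unfolding Q_def by (simp add: sum_distrib_left if_distrib cong: if_cong)
    also have "(\<Sum>i<n. \<Sum>j<n. if i\<noteq>j then y i * cnj (y j) else 0) = Y * cnj Y - YY"
      unfolding ne_sum Y_def YY_def by (simp add: sum_product cnj_sum)
    finally have e2: "Q = of_nat n * (Y * cnj Y - YY)" .
    have num: "P + Q = of_nat n * (Y * cnj Y) - U * V"
      unfolding e1 e2 by (simp add: algebra_simps)
    have cY: "Y = cinner n f g" unfolding Y_def y_def cinner_def by simp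
    have cU: "U = of_real (\<Sum>l<n. (cmod (f l))\<^sup>2)" unfolding U_def u_def
      by (simp only: of_real_sum complex_norm_square)
    have cV: "V = of_real (\<Sum>l<n. (cmod (g l))\<^sup>2)" unfolding V_def v_def
      by (simp only: of_real_sum complex_norm_square)
    have "P / (s*s) + Q / (s*s) = (P + Q) / (s * s)" by (simp add: add_divide_distrib)
    also have "\<dots> = (of_nat n * of_real ((cmod (cinner n f g))^2) - U * V) / of_real (real n - 1)"
      unfolding num s2 cY complex_norm_square ..
    also have "\<dots> = complex_of_real ((real n * (cmod (cinner n f g))^2 - (\<Sum>l<n. (cmod (f l))\<^sup>2) * (\<Sum>l<n. (cmod (g l))\<^sup>2)) / (real n - 1))"
      unfolding cU cV by simp
    finally show ?thesis unfolding P_def Q_def .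
  qed
  finally show ?thesis .
qed
lemma sum_split_plus:
  assumes "finite A" "finite B"
  shows "(\<Sum>t\<in>Inl ` A \<union> Inr ` B. F t) = (\<Sum>a\<in>A. F (Inl a)) + (\<Sum>b\<in>B. F (Inr b))"
proof -
  have "(\<Sum>t\<in>Inl ` A \<union> Inr ` B. F t) = (\<Sum>t\<in>Inl ` A. F t) + (\<Sum>t\<in>Inr ` B. F t)"
    using assms by (intro sum.union_disjoint) auto
  also have "(\<Sum>t\<in>Inl ` A. F t) = (\<Sum>a\<in>A. F (Inl a))" by (simp add: sum.reindex)
  also have "(\<Sum>t\<in>Inr ` B. F t) = (\<Sum>b\<in>B. F (Inr b))" by (simp add: sum.reindex)
  finally show ?thesis .
qed

lemma main_abs:
  fixes P :: "'x \<Rightarrow> 'x \<Rightarrow> real" and N :: "'x \<Rightarrow> real" and e :: "nat \<Rightarrow> 'x"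
    and f :: "'a \<Rightarrow> 'x" and g :: "nat \<Rightarrow> 'x"
  assumes fin: "finite A" and n: "n \<ge> 2"
    and T: "\<And>x. (\<Sum>t\<in>Inl ` A \<union> Inr ` {..<q}. P x (case_sum f g t)) = c * N x"
    and unitA: "\<And>a. a \<in> A \<Longrightarrow> N (f a) = 1" and unitG: "\<And>j. j < q \<Longrightarrow> N (g j) = 1"
    and basis: "\<And>y. (\<Sum>l<n. P (e l) y) = N y" and ebasis: "\<And>l. l < n \<Longrightarrow> N (e l) = 1"
    and sym: "\<And>x y. P x y = P y x"
    and cs: "\<And>x y. P x y \<le> N x * N y"
  shows "(\<Sum>a\<in>A. \<Sum>b\<in>A. (real n * P (f a) (f b) - N (f a) * N (f b)) / (real n - 1)) \<le> (real q)\<^sup>2"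
proof -
  define m where "m = card A"
  have Ts: "(\<Sum>a\<in>A. P x (f a)) + (\<Sum>j<q. P x (g j)) = c * N x" for x
    using T[of x] by (simp add: sum_split_plus fin)
  have cn: "c * real n = real m + real q"
  proof -
    have "c * real n = (\<Sum>l<n. c * N (e l))" by (simp add: ebasis)
    also have "\<dots> = (\<Sum>l<n. (\<Sum>a\<in>A. P (e l) (f a)) + (\<Sum>j<q. P (e l) (g j)))" by (simp add: Ts)
    also have "\<dots> = (\<Sum>a\<in>A. \<Sum>l<n. P (e l) (f a)) + (\<Sum>j<q. \<Sum>l<n. P (e l) (g j))"
      by (simp add: sum.distrib sum.swap[of _ A] sum.swap[of _ "{..<q}"])
    also have "\<dots> = real m + real q" by (simp add: basis unitA unitG m_def)
    finally show ?thesis .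
  qed
  define a where "a = (\<Sum>x\<in>A. \<Sum>y\<in>A. P (f x) (f y))"
  define b where "b = (\<Sum>x\<in>A. \<Sum>j<q. P (f x) (g j))"
  define d where "d = (\<Sum>i<q. \<Sum>j<q. P (g i) (g j))"
  have ea: "a + b = c * real m"
  proof -
    have "a + b = (\<Sum>x\<in>A. (\<Sum>y\<in>A. P (f x) (f y)) + (\<Sum>j<q. P (f x) (g j)))"
      unfolding a_def b_def by (simp add: sum.distrib)
    also have "\<dots> = (\<Sum>x\<in>A. c)" by (intro sum.cong refl) (simp add: Ts unitA)
    finally show ?thesis by (simp add: m_def)
  qed
  have ed: "b + d = c * real q"
  proof -
    have bb: "b = (\<Sum>j<q. \<Sum>x\<in>A. P (g j) (f x))"
      unfolding b_def by (subst sum.swap) (simp add: sym)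
    have "b + d = (\<Sum>j<q. (\<Sum>x\<in>A. P (g j) (f x)) + (\<Sum>i<q. P (g j) (g i)))"
      unfolding bb d_def by (simp add: sum.distrib)
    also have "\<dots> = (\<Sum>j<q. c)" by (intro sum.cong refl) (simp add: Ts unitG)
    finally show ?thesis by simp
  qed
  have dq: "d \<le> real q * real q"
  proof -
    have "d \<le> (\<Sum>i<q. \<Sum>j<q. (1::real))" unfolding d_def
      apply (intro sum_mono)
      subgoal for i j using cs[of "g i" "g j"] unitG[of i] unitG[of j] by simp
      done
    thus ?thesis by simp
  qed
  have lhs: "(\<Sum>x\<in>A. \<Sum>y\<in>A. (real n * P (f x) (f y) - N (f x) * N (f y)) / (real n - 1)) = (real n * a - real m * real m) / (real n - 1)"
  proof -
    have "(\<Sum>x\<in>A. \<Sum>y\<in>A. (real n * P (f x) (f y) - N (f x) * N (f y)) / (real n - 1)) = (\<Sum>x\<in>A. \<Sum>y\<in>A. (real n * P (f x) (f y) - 1)) / (real n - 1)"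
      by (simp add: sum_divide_distrib unitA)
    also have "(\<Sum>x\<in>A. \<Sum>y\<in>A. (real n * P (f x) (f y) - 1)) = real n * a - real m * real m"
      unfolding a_def m_def by (simp add: sum_subtractf sum_distrib_left)
    finally show ?thesis .
  qed
  have key: "real n * a - real m * real m = real n * d - real q * real q"
  proof -
    have a1: "a = c * real m - b" using ea by simp
    have d1: "d = c * real q - b" using ed by simp
    have "real n * a = (c * real n) * real m - real n * b" unfolding a1 by (simp add: algebra_simps)
    moreover have "real n * d = (c * real n) * real q - real n * b" unfolding d1 by (simp add: algebra_simps)
    ultimately show ?thesis unfolding cn by (simp add: algebra_simps)
  qed
  have n1: "real n - 1 > 0" using n by simp
  show ?thesis unfolding lhs key using dq n1
    by (simp add: divide_le_eq power2_eq_square algebra_simps mult_right_mono)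
qed
lemma rinner_nonneg: "rinner n x x \<ge> 0"
  unfolding rinner_def by (intro sum_nonneg) simp
lemma rnorm_sq: "(rnorm n x)\<^sup>2 = rinner n x x"
  unfolding rnorm_def using rinner_nonneg by simp
lemma rnorm1: "rnorm n x = 1 \<Longrightarrow> rinner n x x = 1"
  unfolding rnorm_def by simp
lemma rinner_e: "l < n \<Longrightarrow> rinner n (\<lambda>t. if t = l then 1 else 0) y = y l"
proof -
  assume l: "l < n"
  have "rinner n (\<lambda>t. if t = l then 1 else 0) y = (\<Sum>t<n. if t = l then y t else 0)"
    unfolding rinner_def by (rule sum.cong) auto
  also have "\<dots> = y l" using l by simp
  finally show ?thesis .
qed
lemma rinner_sym: "rinner n x y = rinner n y x"
  unfolding rinner_def by (simp add: mult.commute)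
lemma rinner_cs: "(rinner n x y)\<^sup>2 \<le> rinner n x x * rinner n y y"
  unfolding rinner_def using Cauchy_Schwarz_ineq_sum[of x y "{..<n}"] by (simp add: power2_eq_square)

lemma real_part:
  fixes f g :: "nat \<Rightarrow> nat \<Rightarrow> real"
  assumes n: "n \<ge> 2" and fin: "finite A"
    and fr: "real_untf n (Inl ` A \<union> Inr ` {..<q}) (case_sum f g)"
  shows "(\<Sum>i\<in>A. \<Sum>j\<in>A. rinner_list (real_diagram n (f i)) (real_diagram n (f j))) \<le> (real q)\<^sup>2"
proof -
  from fr obtain c where T0: "\<And>x. (\<Sum>t\<in>Inl ` A \<union> Inr ` {..<q}. \<bar>rinner n x (case_sum f g t)\<bar>\<^sup>2) = c * (rnorm n x)\<^sup>2"
    and U: "\<And>t. t \<in> Inl ` A \<union> Inr ` {..<q} \<Longrightarrow> rnorm n (case_sum f g t) = 1"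
    unfolding real_untf_def by blast
  have unitA: "rinner n (f a) (f a) = 1" if "a \<in> A" for a
    using U[of "Inl a"] that by (auto intro: rnorm1)
  have unitG: "rinner n (g j) (g j) = 1" if "j < q" for j
    using U[of "Inr j"] that by (auto intro: rnorm1)
  have "(\<Sum>a\<in>A. \<Sum>b\<in>A. (real n * (rinner n (f a) (f b))\<^sup>2 - rinner n (f a) (f a) * rinner n (f b) (f b)) / (real n - 1)) \<le> (real q)\<^sup>2"
  proof (rule main_abs[where e="\<lambda>l t. if t = l then 1 else 0" and c=c, OF fin n])
    show "(\<Sum>t\<in>Inl ` A \<union> Inr ` {..<q}. (rinner n x (case_sum f g t))\<^sup>2) = c * rinner n x x" for x
      using T0[of x] by (simp add: rnorm_sq)
    show "rinner n (f a) (f a) = 1" if "a \<in> A" for a using unitA that .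
    show "rinner n (g j) (g j) = 1" if "j < q" for j using unitG that .
    show "(\<Sum>l<n. (rinner n (\<lambda>t. if t = l then 1 else 0) y)\<^sup>2) = rinner n y y" for y
    proof -
      have "(\<Sum>l<n. (rinner n (\<lambda>t. if t = l then 1 else 0) y)\<^sup>2) = (\<Sum>l<n. (y l)\<^sup>2)"
        by (intro sum.cong refl) (simp add: rinner_e)
      thus ?thesis by (simp add: rinner_def power2_eq_square)
    qed
    show "rinner n (\<lambda>t. if t = l then 1 else 0) (\<lambda>t. if t = l then 1 else 0) = 1" if "l < n" for l
      using that by (simp add: rinner_e)
    show "(rinner n x y)\<^sup>2 = (rinner n y x)\<^sup>2" for x y by (simp add: rinner_sym)
    show "(rinner n x y)\<^sup>2 \<le> rinner n x x * rinner n y y" for x y by (rule rinner_cs)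
  qed
  thus ?thesis using n by (simp add: real_diag)
qed
definition cN :: "nat \<Rightarrow> (nat \<Rightarrow> complex) \<Rightarrow> real" where
  "cN n x = (\<Sum>l<n. (cmod (x l))\<^sup>2)"
lemma cN_nonneg: "cN n x \<ge> 0"
  unfolding cN_def by (intro sum_nonneg) simp
lemma cnorm_sq: "(cnorm n x)\<^sup>2 = cN n x"
  unfolding cnorm_def cN_def[symmetric] using cN_nonneg by simp
lemma cnorm1: "cnorm n x = 1 \<Longrightarrow> cN n x = 1"
  unfolding cnorm_def cN_def[symmetric] by simp
lemma cinner_e: "l < n \<Longrightarrow> cinner n (\<lambda>t. if t = l then 1 else 0) y = cnj (y l)"
proof -
  assume l: "l < n"
  have "cinner n (\<lambda>t. if t = l then 1 else 0) y = (\<Sum>t<n. if t = l then cnj (y t) else 0)"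
    unfolding cinner_def by (rule sum.cong) auto
  also have "\<dots> = cnj (y l)" using l by simp
  finally show ?thesis .
qed
lemma cinner_sym: "cmod (cinner n x y) = cmod (cinner n y x)"
proof -
  have "cinner n y x = cnj (cinner n x y)" unfolding cinner_def by (simp add: mult.commute)
  thus ?thesis by simp
qed
lemma cinner_cs: "(cmod (cinner n x y))\<^sup>2 \<le> cN n x * cN n y"
proof -
  have "cmod (cinner n x y) \<le> (\<Sum>l<n. cmod (x l) * cmod (y l))"
    unfolding cinner_def by (rule order_trans[OF norm_sum]) (simp add: norm_mult)
  hence "(cmod (cinner n x y))\<^sup>2 \<le> (\<Sum>l<n. cmod (x l) * cmod (y l))\<^sup>2"
    by (intro power_mono) auto
  also have "\<dots> \<le> cN n x * cN n y"
    unfolding cN_def by (rule Cauchy_Schwarz_ineq_sum)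
  finally show ?thesis .
qed

lemma complex_part:
  fixes f g :: "nat \<Rightarrow> nat \<Rightarrow> complex"
  assumes n: "n \<ge> 2" and fin: "finite A"
    and fr: "complex_untf n (Inl ` A \<union> Inr ` {..<q}) (case_sum f g)"
  shows "(\<Sum>i\<in>A. \<Sum>j\<in>A. cinner_list (complex_diagram n (f i)) (complex_diagram n (f j)))
     = complex_of_real (\<Sum>a\<in>A. \<Sum>b\<in>A. (real n * (cmod (cinner n (f a) (f b)))\<^sup>2 - cN n (f a) * cN n (f b)) / (real n - 1))"
    and "(\<Sum>a\<in>A. \<Sum>b\<in>A. (real n * (cmod (cinner n (f a) (f b)))\<^sup>2 - cN n (f a) * cN n (f b)) / (real n - 1)) \<le> (real q)\<^sup>2"
proof -
  show "(\<Sum>i\<in>A. \<Sum>j\<in>A. cinner_list (complex_diagram n (f i)) (complex_diagram n (f j)))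
     = complex_of_real (\<Sum>a\<in>A. \<Sum>b\<in>A. (real n * (cmod (cinner n (f a) (f b)))\<^sup>2 - cN n (f a) * cN n (f b)) / (real n - 1))"
    using n by (simp add: complex_diag cN_def of_real_sum)
  from fr obtain c where T0: "\<And>x. (\<Sum>t\<in>Inl ` A \<union> Inr ` {..<q}. (cmod (cinner n x (case_sum f g t)))\<^sup>2) = c * (cnorm n x)\<^sup>2"
    and U: "\<And>t. t \<in> Inl ` A \<union> Inr ` {..<q} \<Longrightarrow> cnorm n (case_sum f g t) = 1"
    unfolding complex_untf_def by blast
  have unitA: "cN n (f a) = 1" if "a \<in> A" for a
    using U[of "Inl a"] that by (auto intro: cnorm1)
  have unitG: "cN n (g j) = 1" if "j < q" for j
    using U[of "Inr j"] that by (auto intro: cnorm1)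
  show "(\<Sum>a\<in>A. \<Sum>b\<in>A. (real n * (cmod (cinner n (f a) (f b)))\<^sup>2 - cN n (f a) * cN n (f b)) / (real n - 1)) \<le> (real q)\<^sup>2"
  proof (rule main_abs[where e="\<lambda>l t. if t = l then 1 else 0" and c=c, OF fin n])
    show "(\<Sum>t\<in>Inl ` A \<union> Inr ` {..<q}. (cmod (cinner n x (case_sum f g t)))\<^sup>2) = c * cN n x" for x
      using T0[of x] by (simp add: cnorm_sq)
    show "cN n (f a) = 1" if "a \<in> A" for a using unitA that .
    show "cN n (g j) = 1" if "j < q" for j using unitG that .
    show "(\<Sum>l<n. (cmod (cinner n (\<lambda>t. if t = l then 1 else 0) y))\<^sup>2) = cN n y" for y
    proof -
      have "(\<Sum>l<n. (cmod (cinner n (\<lambda>t. if t = l then 1 else 0) y))\<^sup>2) = (\<Sum>l<n. (cmod (y l))\<^sup>2)"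
        by (intro sum.cong refl) (simp add: cinner_e)
      thus ?thesis by (simp add: cN_def)
    qed
    show "cN n (\<lambda>t. if t = l then 1 else 0) = 1" if "l < n" for l
    proof -
      have "cN n (\<lambda>t. if t = l then 1 else 0) = (\<Sum>t<n. if t = l then 1 else 0)"
        unfolding cN_def by (rule sum.cong) auto
      also have "\<dots> = 1" using that by simp
      finally show ?thesis .
    qed
    show "(cmod (cinner n x y))\<^sup>2 = (cmod (cinner n y x))\<^sup>2" for x y by (simp add: cinner_sym)
    show "(cmod (cinner n x y))\<^sup>2 \<le> cN n x * cN n y" for x y by (rule cinner_cs)
  qed
qed
theorem theorem3p1:
  fixes n k p q :: nat and I :: "nat set"
  shows
  "(\<forall>(f :: nat \<Rightarrow> nat \<Rightarrow> real) (g :: nat \<Rightarrow> nat \<Rightarrow> real).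
      n \<ge> 2 \<longrightarrow> real_untf n {1..k} f \<longrightarrow> I \<subseteq> {1..k} \<longrightarrow> card I = p \<longrightarrow>
      (\<forall>j<q. rnorm n (g j) = 1) \<longrightarrow>
      real_untf n (Inl ` ({1..k} - I) \<union> Inr ` {..<q}) (case_sum f g) \<longrightarrow>
      (\<Sum>i\<in>{1..k} - I. \<Sum>j\<in>{1..k} - I.
          rinner_list (real_diagram n (f i)) (real_diagram n (f j))) \<le> (real q)\<^sup>2)
   \<and>
   (\<forall>(f :: nat \<Rightarrow> nat \<Rightarrow> complex) (g :: nat \<Rightarrow> nat \<Rightarrow> complex).
      n \<ge> 2 \<longrightarrow> complex_untf n {1..k} f \<longrightarrow> I \<subseteq> {1..k} \<longrightarrow> card I = p \<longrightarrow>
      (\<forall>j<q. cnorm n (g j) = 1) \<longrightarrow>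
      complex_untf n (Inl ` ({1..k} - I) \<union> Inr ` {..<q}) (case_sum f g) \<longrightarrow>
      (let S = (\<Sum>i\<in>{1..k} - I. \<Sum>j\<in>{1..k} - I.
          cinner_list (complex_diagram n (f i)) (complex_diagram n (f j)))
       in Im S = 0 \<and> Re S \<le> (real q)\<^sup>2))"
proof (intro conjI allI impI)
  have fin: "finite ({1..k} - I)" by simp
  fix f g :: "nat \<Rightarrow> nat \<Rightarrow> real"
  assume "n \<ge> 2" "real_untf n (Inl ` ({1..k} - I) \<union> Inr ` {..<q}) (case_sum f g)"
  thus "(\<Sum>i\<in>{1..k} - I. \<Sum>j\<in>{1..k} - I.
          rinner_list (real_diagram n (f i)) (real_diagram n (f j))) \<le> (real q)\<^sup>2"
    using real_part[OF _ fin] by blast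
next
  have fin: "finite ({1..k} - I)" by simp
  fix f g :: "nat \<Rightarrow> nat \<Rightarrow> complex"
  assume n: "n \<ge> 2" and fr: "complex_untf n (Inl ` ({1..k} - I) \<union> Inr ` {..<q}) (case_sum f g)"
  show "let S = (\<Sum>i\<in>{1..k} - I. \<Sum>j\<in>{1..k} - I.
          cinner_list (complex_diagram n (f i)) (complex_diagram n (f j)))
       in Im S = 0 \<and> Re S \<le> (real q)\<^sup>2"
    unfolding Let_def complex_part(1)[OF n fin fr] using complex_part(2)[OF n fin fr] by simp
qed
end
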